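(* Let $f(x)=a_nx^n+a_{n-1}x^{n-1}+\dots+a_1x+a_0\in\mathbb{Z}[x]$, where $n$ is not divisible by $3$. Suppose that there exists a prime $p$ such that $p\nmid a_n$, $p^3\mid a_i$ for all $0\leq i\leq n-1$, and $p^4\nmid a_0$. Then $f(x)$ is irreducible over $\mathbb{Z}$.
   Context: A nonconstant polynomial in $\mathbb{Z}[x]$ is called reducible over $\mathbb{Z}$ if it can be written as a product of two nonconstant polynomials in $\mathbb{Z}[x]$; otherwise it is irreducible over $\mathbb{Z}$. *)

theory Defs
  imports "HOL-Computational_Algebra.Polynomial"
begin

definition irreducible_over_Z :: "int poly \<Rightarrow> bool" where
  "irreducible_over_Z f \<longleftrightarrow>
     degree f > 0 \<and> \<not> (\<exists>g h. degree g > 0 \<and> degree h > 0 \<and> f = g * h)"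

end

theory Submission
  imports Defs
begin

lemma exists_min_idx:
  fixes g :: "int poly" and W :: "nat \<Rightarrow> nat"
  assumes "g \<noteq> 0"
  shows "\<exists>i0. coeff g i0 \<noteq> 0 \<and> (\<forall>i. coeff g i \<noteq> 0 \<longrightarrow> W i0 \<le> W i)
           \<and> (\<forall>i<i0. coeff g i \<noteq> 0 \<longrightarrow> W i0 < W i)"
proof -
  have "coeff g (degree g) \<noteq> 0" using assms by simp
  then obtain x where x: "coeff g x \<noteq> 0" "\<forall>y. coeff g y \<noteq> 0 \<longrightarrow> W x \<le> W y"
    using ex_has_least_nat[of "\<lambda>i. coeff g i \<noteq> 0" "degree g" W] by blast
  define i0 where "i0 = (LEAST i. coeff g i \<noteq> 0 \<and> W i = W x)"
  have P: "coeff g i0 \<noteq> 0 \<and> W i0 = W x"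
    unfolding i0_def by (rule LeastI[of _ x]) (use x in auto)
  have "\<forall>i<i0. coeff g i \<noteq> 0 \<longrightarrow> W i0 < W i"
  proof (intro allI impI)
    fix i assume i: "i < i0" "coeff g i \<noteq> 0"
    have "\<not> (coeff g i \<noteq> 0 \<and> W i = W x)"
      using not_less_Least[of i "\<lambda>i. coeff g i \<noteq> 0 \<and> W i = W x"] i(1) unfolding i0_def by blast
    with i x P show "W i0 < W i" by (metis le_neq_implies_less)
  qed
  with P x show ?thesis by auto
qed

lemma key:
  fixes g h :: "int poly" and p :: int and A B i0 j0 :: nat and W :: "int poly \<Rightarrow> nat \<Rightarrow> nat"
  assumes p: "prime p"
  and W: "\<And>q i. W q i = A * multiplicity p (coeff q i) + B * i"
  and g0: "coeff g i0 \<noteq> 0" and gmin: "\<forall>i. coeff g i \<noteq> 0 \<longrightarrow> W g i0 \<le> W g i"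
  and glt: "\<forall>i<i0. coeff g i \<noteq> 0 \<longrightarrow> W g i0 < W g i"
  and h0: "coeff h j0 \<noteq> 0" and hmin: "\<forall>i. coeff h i \<noteq> 0 \<longrightarrow> W h j0 \<le> W h i"
  and hlt: "\<forall>i<j0. coeff h i \<noteq> 0 \<longrightarrow> W h j0 < W h i"
  shows "\<not> p ^ Suc (multiplicity p (coeff g i0) + multiplicity p (coeff h j0)) dvd coeff (g*h) (i0+j0)"
proof
  define E where "E = multiplicity p (coeff g i0) + multiplicity p (coeff h j0)"
  define k where "k = i0 + j0"
  assume hyp: "p ^ Suc (multiplicity p (coeff g i0) + multiplicity p (coeff h j0)) dvd coeff (g*h) (i0+j0)"
  have nu: "\<not> is_unit p" using p by (metis not_prime_unit)
  have pe: "prime_elem p" using p by (rule prime_imp_prime_elem)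
  have split: "coeff (g*h) k = coeff g i0 * coeff h (k - i0) + (\<Sum>u\<in>{..k}-{i0}. coeff g u * coeff h (k-u))"
    unfolding coeff_mult by (rule sum.remove) (auto simp: k_def)
  have rest: "p ^ Suc E dvd (\<Sum>u\<in>{..k}-{i0}. coeff g u * coeff h (k-u))"
  proof (rule dvd_sum)
    fix u assume u: "u \<in> {..k}-{i0}"
    show "p ^ Suc E dvd coeff g u * coeff h (k-u)"
    proof (cases "coeff g u = 0 \<or> coeff h (k-u) = 0")
      case True then show ?thesis by auto
    next
      case False
      have lt: "W g i0 + W h j0 < W g u + W h (k-u)"
      proof (cases "u < i0")
        case True
        then show ?thesis using glt hmin False by fastforce
      next
        case False2: False
        with u have "u > i0" by auto
        then have "k - u < j0" using u by (auto simp: k_def)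
        then show ?thesis using gmin hlt False by fastforce
      qed
      have "B * i0 + B * j0 = B * u + B * (k-u)" using u by (auto simp: k_def simp flip: distrib_left)
      with lt have "A * E < A * (multiplicity p (coeff g u) + multiplicity p (coeff h (k-u)))"
        unfolding W E_def by (simp add: distrib_left)
      then have "Suc E \<le> multiplicity p (coeff g u) + multiplicity p (coeff h (k-u))"
        by (simp add: Suc_le_eq)
      also have "\<dots> = multiplicity p (coeff g u * coeff h (k-u))"
        using False pe by (simp add: prime_elem_multiplicity_mult_distrib)
      finally show ?thesis by (rule multiplicity_dvd')
    qed
  qed
  have main: "\<not> p ^ Suc E dvd coeff g i0 * coeff h (k - i0)"
  proof
    assume "p ^ Suc E dvd coeff g i0 * coeff h (k - i0)"
    then have "p ^ Suc E dvd coeff g i0 * coeff h j0" by (simp add: k_def)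
    then have "Suc E \<le> multiplicity p (coeff g i0 * coeff h j0)"
      using g0 h0 nu by (intro multiplicity_geI) auto
    also have "\<dots> = E" using g0 h0 pe by (simp add: prime_elem_multiplicity_mult_distrib E_def)
    finally show False by simp
  qed
  from hyp have "p ^ Suc E dvd coeff (g*h) k" by (simp add: E_def k_def)
  with rest main show False unfolding split by (simp add: dvd_add_left_iff)
qed

theorem theorem3p2:
  fixes f :: "int poly" and p :: int
  assumes "\<not> 3 dvd degree f"
    and "prime p"
    and "\<not> p dvd lead_coeff f"
    and "\<forall>i < degree f. p ^ 3 dvd coeff f i"
    and "\<not> p ^ 4 dvd coeff f 0"
  shows "irreducible_over_Z f"
proof -
  define n where "n = degree f"
  have n0: "degree f > 0" using assms(1) by (cases "degree f") auto
  show ?thesis unfolding irreducible_over_Z_def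
  proof (intro conjI n0 notI)
    assume "\<exists>g h. degree g > 0 \<and> degree h > 0 \<and> f = g * h"
    then obtain g h where r: "degree g > 0" and s: "degree h > 0" and fgh: "f = g * h" by blast
    have gnz: "g \<noteq> 0" and hnz: "h \<noteq> 0" using r s by auto
    have deg: "n = degree g + degree h" unfolding n_def fgh using gnz hnz by (simp add: degree_mult_eq)
    have lc: "lead_coeff f = lead_coeff g * lead_coeff h" unfolding fgh by (simp add: lead_coeff_mult)
    have pg: "\<not> p dvd lead_coeff g" using assms(3) lc by (metis dvd_mult2)
    have ph: "\<not> p dvd lead_coeff h" using assms(3) lc by (metis dvd_mult)
    have a0: "coeff f 0 = coeff g 0 * coeff h 0" unfolding fgh by (simp add: coeff_mult_0)
    have a0nz: "coeff f 0 \<noteq> 0" using assms(5) by auto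
    have b0: "coeff g 0 \<noteq> 0" and c0: "coeff h 0 \<noteq> 0" using a0 a0nz by auto
    have nu: "\<not> is_unit p" using assms(2) by (metis not_prime_unit)
    have pe: "prime_elem p" using assms(2) by (rule prime_imp_prime_elem)
    have d3: "p ^ 3 dvd coeff f 0" using assms(4) n0 by auto
    have va0: "multiplicity p (coeff f 0) = 3"
      using d3 assms(5) a0nz nu power_dvd_iff_le_multiplicity[of "coeff f 0" p 3]
        power_dvd_iff_le_multiplicity[of "coeff f 0" p 4] by linarith
    have vsum: "multiplicity p (coeff g 0) + multiplicity p (coeff h 0) = 3"
      using va0 a0 b0 c0 pe by (simp add: prime_elem_multiplicity_mult_distrib)
    define W where "W = (\<lambda>q i. n * multiplicity p (coeff q i) + 3 * i)"
    have W_app: "\<And>q i. W q i = n * multiplicity p (coeff q i) + 3 * i" by (simp add: W_def)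
    obtain i0 where i0: "coeff g i0 \<noteq> 0" "\<forall>i. coeff g i \<noteq> 0 \<longrightarrow> W g i0 \<le> W g i"
         "\<forall>i<i0. coeff g i \<noteq> 0 \<longrightarrow> W g i0 < W g i"
      using exists_min_idx[OF gnz, of "W g"] by blast
    obtain j0 where j0: "coeff h j0 \<noteq> 0" "\<forall>i. coeff h i \<noteq> 0 \<longrightarrow> W h j0 \<le> W h i"
         "\<forall>i<j0. coeff h i \<noteq> 0 \<longrightarrow> W h j0 < W h i"
      using exists_min_idx[OF hnz, of "W h"] by blast
    define E where "E = multiplicity p (coeff g i0) + multiplicity p (coeff h j0)"
    have nd: "\<not> p ^ Suc E dvd coeff f (i0+j0)"
      unfolding E_def fgh by (rule key[OF assms(2) W_app i0 j0])
    have Mge: "n * E + 3 * (i0+j0) \<ge> 3 * n"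
    proof (cases "i0 + j0 < n")
      case True
      then have "p ^ 3 dvd coeff f (i0+j0)" using assms(4) n_def by auto
      then have "E \<ge> 3"
      proof -
        assume d: "p ^ 3 dvd coeff f (i0+j0)"
        show "E \<ge> 3"
        proof (rule ccontr)
          assume "\<not> E \<ge> 3"
          then have "p ^ Suc E dvd p ^ 3" by (intro le_imp_power_dvd) simp
          with d nd show False using dvd_trans by blast
        qed
      qed
      then show ?thesis by (metis add_increasing2 le0 mult.commute mult_le_mono2)
    next
      case False
      have "i0 + j0 \<le> n"
      proof (rule ccontr)
        assume "\<not> i0 + j0 \<le> n"
        then have "coeff f (i0+j0) = 0" using coeff_eq_0[of f "i0+j0"] n_def by auto
        with nd show False by simp
      qed
      with False have "i0 + j0 = n" by simp
      then show ?thesis by simp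
    qed
    have M: "W g i0 + W h j0 = n * E + 3 * (i0+j0)" by (simp add: W_app E_def algebra_simps)
    have W00: "W g 0 + W h 0 = 3 * n" using vsum by (simp add: W_app flip: distrib_left)
    have z: "i0 = 0 \<and> j0 = 0"
    proof (rule ccontr)
      assume "\<not> (i0 = 0 \<and> j0 = 0)"
      then have "W g i0 + W h j0 < W g 0 + W h 0"
        using i0 j0 b0 c0 by (metis add_le_less_mono add_less_le_mono bot_nat_0.not_eq_extremum)
      with M W00 Mge show False by linarith
    qed
    have Wgr: "W g (degree g) = 3 * degree g"
      using pg by (simp add: W_app not_dvd_imp_multiplicity_0)
    have Whs: "W h (degree h) = 3 * degree h"
      using ph by (simp add: W_app not_dvd_imp_multiplicity_0)
    have "W g 0 \<le> 3 * degree g" using i0(2) z Wgr gnz by (metis leading_coeff_neq_0)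
    moreover have "W h 0 \<le> 3 * degree h" using j0(2) z Whs hnz by (metis leading_coeff_neq_0)
    ultimately have eq: "n * multiplicity p (coeff g 0) = 3 * degree g"
      and eqh: "n * multiplicity p (coeff h 0) = 3 * degree h"
      using W00 deg by (simp_all add: W_app)
    have "(3::nat) dvd n * multiplicity p (coeff g 0)" using eq by simp
    then have "3 dvd multiplicity p (coeff g 0)"
      using assms(1) n_def by (simp add: prime_dvd_mult_iff)
    with vsum have "multiplicity p (coeff g 0) = 0 \<or> multiplicity p (coeff g 0) = 3"
      by (auto elim!: dvdE)
    then show False
    proof
      assume "multiplicity p (coeff g 0) = 0"
      with eq r show False by simp
    next
      assume "multiplicity p (coeff g 0) = 3"
      with vsum eqh s show False by simp
    qed
  qed
qed

end
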